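(* Let $d\geq 1$ and for $i=2,\ldots,d+1$ let $\sigma_i\in\Sigma_{d+1}$ be the transposition $(1\ i)$. Let $0<a_1<\cdots<a_d$ be integers forming a progression-free sequence, and let $m_d>4a_d$ be an integer. Consider the group $\Gamma_d=\Sigma_{d+1}\oplus\mathbb{Z}/m_d$ and its elements $\gamma_i=(\sigma_{i+1},a_i)$ for $i=1,\ldots,d$. Then $(\Gamma_d,\{\gamma_1,\ldots,\gamma_d\})$ satisfies condition $\mathcal{G}(4)$.
   Context: $\Sigma_{d+1}$ is the symmetric group on $\{1,\ldots,d+1\}$. A sequence $a_1<\cdots<a_d$ of integers is progression-free if $a_i+a_j=2a_k$ with $1\leq i,j,k\leq d$ implies $i=j=k$. For a finite group $\Gamma$ with identity $e$ and $D=\{\gamma_1,\ldots,\gamma_d\}\subseteq\Gamma$, and $p\geq 1$, the pair $(\Gamma,D)$ satisfies $\mathcal{R}(p)$ if for every sequence of indices $i_0,\ldots,i_{2p-1}\in\{1,\ldots,d\}$ the equality $\gamma_{i_0}\gamma_{i_1}^{-1}\gamma_{i_2}\gamma_{i_3}^{-1}\cdots\gamma_{i_{2p-2}}\gamma_{i_{2p-1}}^{-1}=e$ implies $i_l=i_{l+1}$ for some $l\in\{0,\ldots,2p-1\}$ (indices modulo $2p$); it satisfies $\mathcal{G}(p)$ if it satisfies $\mathcal{R}(1),\ldots,\mathcal{R}(p)$. *)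

theory Defs
  imports "HOL-Algebra.Sym_Groups" "HOL-Algebra.Elementary_Groups"
begin

definition progression_free :: "nat \<Rightarrow> (nat \<Rightarrow> int) \<Rightarrow> bool" where
  "progression_free d a \<longleftrightarrow>
     (\<forall>i\<in>{1..d}. \<forall>j\<in>{1..d}. \<forall>k\<in>{1..d}. a i + a j = 2 * a k \<longrightarrow> i = j \<and> j = k)"

fun alt_word :: "('g, 'b) monoid_scheme \<Rightarrow> (nat \<Rightarrow> 'g) \<Rightarrow> (nat \<Rightarrow> nat) \<Rightarrow> nat \<Rightarrow> 'g" where
  "alt_word G g i 0 = \<one>\<^bsub>G\<^esub>"
| "alt_word G g i (Suc k) =
     alt_word G g i k \<otimes>\<^bsub>G\<^esub> (g (i (2*k)) \<otimes>\<^bsub>G\<^esub> inv\<^bsub>G\<^esub> (g (i (2*k+1))))"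

definition cond_R :: "('g, 'b) monoid_scheme \<Rightarrow> nat \<Rightarrow> (nat \<Rightarrow> 'g) \<Rightarrow> nat \<Rightarrow> bool" where
  "cond_R G d g p \<longleftrightarrow>
     (\<forall>i :: nat \<Rightarrow> nat. (\<forall>l<2*p. i l \<in> {1..d}) \<and> alt_word G g i p = \<one>\<^bsub>G\<^esub>
        \<longrightarrow> (\<exists>l<2*p. i l = i ((l + 1) mod (2*p))))"

definition cond_G :: "('g, 'b) monoid_scheme \<Rightarrow> nat \<Rightarrow> (nat \<Rightarrow> 'g) \<Rightarrow> nat \<Rightarrow> bool" where
  "cond_G G d g p \<longleftrightarrow> (\<forall>q\<in>{1..p}. cond_R G d g q)"

end

theory Submission
  imports Defs
begin

fun step :: "nat \<Rightarrow> nat option \<Rightarrow> nat option" where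
  "step y None = Some y" | "step y (Some w) = (if w = y then None else Some w)"
definition run :: "nat list \<Rightarrow> nat option \<Rightarrow> nat option" where "run xs z = foldr step xs z"
definition good :: "nat list \<Rightarrow> bool" where
 "good xs = (run xs None = None \<and> (\<forall>w\<in>set xs. run xs (Some w) = Some w))"
definition cycd :: "nat list \<Rightarrow> bool" where
 "cycd xs = (\<forall>l<length xs. xs!l \<noteq> xs!(Suc l mod length xs))"
fun gen2 :: "nat \<Rightarrow> nat \<Rightarrow> nat \<Rightarrow> nat list list" where
 "gen2 k p 0 = [[]]" |
 "gen2 k p (Suc n) = concat (map (\<lambda>v. map (Cons v) (gen2 (if v = k then Suc k else k) v n)) (filter (\<lambda>v. v \<noteq> p) [0..<Suc k]))"

lemma comp2: "filter (\<lambda>c. cycd c \<and> good c) (map (Cons 0) (gen2 1 0 1)) = []"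
  by code_simp
lemma comp4: "filter (\<lambda>c. cycd c \<and> good c) (map (Cons 0) (gen2 1 0 3)) = []"
  by code_simp
lemma comp6: "filter (\<lambda>c. cycd c \<and> good c) (map (Cons 0) (gen2 1 0 5)) = [[0,1,0,1,0,1]]"
  by code_simp
lemma comp8: "filter (\<lambda>c. cycd c \<and> good c) (map (Cons 0) (gen2 1 0 7)) = [[0,1,0,2,0,1,0,2],[0,1,0,2,1,0,1,2],[0,1,2,0,1,0,2,1],[0,1,2,0,2,1,0,2],[0,1,2,1,0,1,2,1],[0,1,2,1,0,2,1,2]]"
  by code_simp

fun idx :: "nat list \<Rightarrow> nat \<Rightarrow> nat" where
  "idx [] x = 0" | "idx (y#ys) x = (if x = y then 0 else Suc (idx ys x))"

fun canon :: "nat list \<Rightarrow> nat list \<Rightarrow> nat list" where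
  "canon seen [] = []"
| "canon seen (x#xs) = (let s = (if x \<in> set seen then seen else seen @ [x]) in idx s x # canon s xs)"

fun fin :: "nat list \<Rightarrow> nat list \<Rightarrow> nat list" where
  "fin seen [] = seen"
| "fin seen (x#xs) = fin (if x \<in> set seen then seen else seen @ [x]) xs"

fun adjd :: "nat \<Rightarrow> nat list \<Rightarrow> bool" where
  "adjd p [] = True" | "adjd p (x#xs) = (x \<noteq> p \<and> adjd x xs)"

lemma idx_append: "x \<in> set s \<Longrightarrow> idx (s @ r) x = idx s x"
  by (induction s) auto

lemma idx_less: "x \<in> set s \<Longrightarrow> idx s x < length s"
  by (induction s) auto

lemma idx_snoc: "x \<notin> set s \<Longrightarrow> idx (s @ [x]) x = length s"
  by (induction s) auto

lemma inj_idx: "inj_on (idx s) (set s)"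
proof (induction s)
  case (Cons y ys)
  show ?case unfolding inj_on_def
  proof (intro ballI impI)
    fix u v assume "u \<in> set (y#ys)" "v \<in> set (y#ys)" "idx (y#ys) u = idx (y#ys) v"
    then show "u = v" using Cons.IH unfolding inj_on_def by (auto split: if_splits)
  qed
qed simp

lemma fin_prefix: "\<exists>r. fin seen xs = seen @ r"
proof (induction xs arbitrary: seen)
  case (Cons x xs)
  then obtain r where "fin (if x \<in> set seen then seen else seen @ [x]) xs = (if x \<in> set seen then seen else seen @ [x]) @ r"
    by blast
  then show ?case by (cases "x \<in> set seen") auto
qed simp

lemma fin_set: "set xs \<subseteq> set (fin seen xs)"
proof (induction xs arbitrary: seen)
  case (Cons x xs)
  have "x \<in> set (fin (if x \<in> set seen then seen else seen @ [x]) xs)"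
    using fin_prefix[of "if x \<in> set seen then seen else seen @ [x]" xs] by auto
  then show ?case using Cons by auto
qed simp

lemma canon_map: "canon seen xs = map (idx (fin seen xs)) xs"
proof (induction xs arbitrary: seen)
  case (Cons x xs)
  define s where "s = (if x \<in> set seen then seen else seen @ [x])"
  have xs: "x \<in> set s" unfolding s_def by auto
  obtain r where r: "fin s xs = s @ r" using fin_prefix by blast
  have "canon seen (x#xs) = idx s x # canon s xs" unfolding s_def by (simp add: Let_def)
  also have "\<dots> = idx (fin s xs) x # map (idx (fin s xs)) xs" using Cons r idx_append[OF xs] by simp
  finally show ?case unfolding s_def by simp
qed simp

lemma canon_gen:
  "p \<in> set seen \<Longrightarrow> adjd p xs \<Longrightarrow> canon seen xs \<in> set (gen2 (length seen) (idx seen p) (length xs))"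
proof (induction xs arbitrary: seen p)
  case Nil then show ?case by simp
next
  case (Cons x xs)
  define s where "s = (if x \<in> set seen then seen else seen @ [x])"
  have xs: "x \<in> set s" unfolding s_def by auto
  have xp: "x \<noteq> p" and ad: "adjd x xs" using Cons.prems by auto
  have rec: "canon s xs \<in> set (gen2 (length s) (idx s x) (length xs))"
    using Cons.IH[OF xs ad] .
  have eq: "canon seen (x#xs) = idx s x # canon s xs" unfolding s_def by (simp add: Let_def)
  show ?case
  proof (cases "x \<in> set seen")
    case True
    then have ss: "s = seen" unfolding s_def by simp
    have v1: "idx seen x < length seen" using idx_less True by blast
    have v2: "idx seen x \<noteq> idx seen p" using inj_idx[of seen] True Cons.prems(1) xp
      unfolding inj_on_def by blast
    show ?thesis unfolding eq using rec v1 v2 ss by auto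
  next
    case False
    then have ss: "s = seen @ [x]" unfolding s_def by simp
    have v: "idx s x = length seen" using ss idx_snoc False by simp
    have v2: "idx seen p < length seen" using idx_less Cons.prems(1) by blast
    show ?thesis unfolding eq using rec v v2 ss by auto
  qed
qed

lemma run_set: "set_option (run xs z) \<subseteq> set xs \<union> set_option z"
proof (induction xs)
  case Nil then show ?case by (simp add: run_def)
next
  case (Cons x xs)
  then show ?case by (cases "run xs z") (auto simp: run_def)
qed

lemma run_map:
  assumes "inj_on h (set xs \<union> set_option z)"
  shows "run (map h xs) (map_option h z) = map_option h (run xs z)"
  using assms
proof (induction xs)
  case Nil then show ?case by (simp add: run_def)
next
  case (Cons x xs)
  have ih: "run (map h xs) (map_option h z) = map_option h (run xs z)"
    using Cons by (auto intro: inj_on_subset)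
  have "step (h x) (map_option h (run xs z)) = map_option h (step x (run xs z))"
  proof (cases "run xs z")
    case (Some w)
    then have "w \<in> set (x#xs) \<union> set_option z" using run_set[of xs z] by auto
    then show ?thesis using Some Cons.prems unfolding inj_on_def by auto
  qed simp
  then show ?case using ih by (simp add: run_def)
qed

lemma good_map: "good xs \<Longrightarrow> inj_on h (set xs) \<Longrightarrow> good (map h xs)"
  unfolding good_def
proof (intro conjI ballI)
  assume g: "run xs None = None \<and> (\<forall>w\<in>set xs. run xs (Some w) = Some w)" and i: "inj_on h (set xs)"
  show "run (map h xs) None = None" using run_map[of h xs None] g i by simp
  fix w assume "w \<in> set (map h xs)"
  then obtain u where u: "u \<in> set xs" "w = h u" by auto
  have "set xs \<union> set_option (Some u) = set xs" using u by auto
  then show "run (map h xs) (Some w) = Some w" using run_map[of h xs "Some u"] g i u by simp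
qed

lemma cycd_map: "cycd xs \<Longrightarrow> inj_on h (set xs) \<Longrightarrow> cycd (map h xs)"
  unfolding cycd_def
proof (intro allI impI)
  fix l assume c: "\<forall>l<length xs. xs ! l \<noteq> xs ! (Suc l mod length xs)" and i: "inj_on h (set xs)"
    and l: "l < length (map h xs)"
  have "0 < length xs" using l by auto
  then have "Suc l mod length xs < length xs" by simp
  then show "map h xs ! l \<noteq> map h xs ! (Suc l mod length (map h xs))"
    using c l i unfolding inj_on_def by (simp) (metis nth_mem)
qed

lemma adjd_nth: "(\<forall>l. Suc l < length (x0#rest) \<longrightarrow> (x0#rest)!l \<noteq> (x0#rest)!Suc l) \<Longrightarrow> adjd x0 rest"
proof (induction rest arbitrary: x0)
  case (Cons y ys)
  have h1: "y \<noteq> x0" using Cons.prems[rule_format, of 0] by simp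
  have "\<forall>l. Suc l < length (y#ys) \<longrightarrow> (y#ys)!l \<noteq> (y#ys)!Suc l"
  proof (intro allI impI)
    fix l assume "Suc l < length (y#ys)"
    then show "(y#ys)!l \<noteq> (y#ys)!Suc l" using Cons.prems[rule_format, of "Suc l"] by simp
  qed
  then show ?case using Cons.IH h1 by simp
qed simp

lemma canon_props:
  fixes xs :: "nat list"
  assumes "xs \<noteq> []" "cycd xs" "good xs"
  shows "canon [] xs \<in> set (filter (\<lambda>c. cycd c \<and> good c) (map (Cons 0) (gen2 1 0 (length xs - 1))))"
    and "\<And>j l. j < length xs \<Longrightarrow> l < length xs \<Longrightarrow> (xs!j = xs!l) = (canon [] xs ! j = canon [] xs ! l)"
proof -
  define h where "h = idx (fin [] xs)"
  have cm: "canon [] xs = map h xs" unfolding h_def by (rule canon_map)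
  have inj: "inj_on h (set xs)" unfolding h_def by (rule inj_on_subset[OF inj_idx fin_set])
  obtain x0 rest where xs: "xs = x0 # rest" using assms(1) by (cases xs) auto
  have "\<forall>l. Suc l < length xs \<longrightarrow> xs!l \<noteq> xs!Suc l"
  proof (intro allI impI)
    fix l assume l: "Suc l < length xs"
    then have e: "Suc l mod length xs = Suc l" by simp
    have "l < length xs" using l by simp
    then have "xs!l \<noteq> xs!(Suc l mod length xs)" using assms(2) unfolding cycd_def by blast
    then show "xs!l \<noteq> xs!Suc l" unfolding e .
  qed
  then have ad: "adjd x0 rest" using adjd_nth xs by blast
  have "canon [] xs = 0 # canon [x0] rest" using xs by simp
  moreover have "canon [x0] rest \<in> set (gen2 1 0 (length rest))"
    using canon_gen[of x0 "[x0]" rest] ad by simp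
  ultimately have "canon [] xs \<in> set (map (Cons 0) (gen2 1 0 (length xs - 1)))" using xs by simp
  moreover have "cycd (canon [] xs)" using cycd_map[OF assms(2) inj] cm by simp
  moreover have "good (canon [] xs)" using good_map[OF assms(3) inj] cm by simp
  ultimately show "canon [] xs \<in> set (filter (\<lambda>c. cycd c \<and> good c) (map (Cons 0) (gen2 1 0 (length xs - 1))))"
    by simp
  fix j l assume jl: "j < length xs" "l < length xs"
  have "xs!j \<in> set xs" "xs!l \<in> set xs" using jl by auto
  moreover have "canon [] xs ! j = h (xs!j)" "canon [] xs ! l = h (xs!l)" using cm jl by simp_all
  ultimately show "(xs!j = xs!l) = (canon [] xs ! j = canon [] xs ! l)"
    using inj_on_eq_iff[OF inj] by metis
qed

definition prodT :: "nat list \<Rightarrow> nat \<Rightarrow> nat" where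
  "prodT xs = foldr (\<lambda>y f. transpose 1 (y+1) \<circ> f) xs id"

lemma foldr_T: "foldr (\<lambda>y f. transpose 1 (y+1) \<circ> f) xs g = foldr (\<lambda>y f. transpose 1 (y+1) \<circ> f) xs id \<circ> g"
  by (induction xs) (auto simp: comp_assoc)

lemma prodT_append: "prodT (xs @ ys) = prodT xs \<circ> prodT ys"
  unfolding prodT_def foldr_append by (rule foldr_T)

fun enc :: "nat option \<Rightarrow> nat" where
  "enc None = 1" | "enc (Some w) = w + 1"

lemma prodT_enc:
  assumes "\<forall>x\<in>set xs. x \<ge> 1" "\<forall>w\<in>set_option z. w \<ge> 1"
  shows "prodT xs (enc z) = enc (run xs z)"
  using assms(1)
proof (induction xs)
  case Nil then show ?case by (simp add: prodT_def run_def)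
next
  case (Cons x xs)
  have ih: "prodT xs (enc z) = enc (run xs z)" using Cons by simp
  have "transpose 1 (x+1) (enc (run xs z)) = enc (step x (run xs z))"
  proof (cases "run xs z")
    case (Some w)
    then have "w \<in> set (x#xs) \<union> set_option z" using run_set[of xs z] by auto
    then have "w \<ge> 1" using Cons.prems assms(2) by auto
    then show ?thesis using Some by (simp add: transpose_def)
  qed (simp add: transpose_def)
  then show ?case using ih by (simp add: prodT_def run_def)
qed

lemma prodT_good:
  assumes "\<forall>x\<in>set xs. x \<ge> 1" "prodT xs = id"
  shows "good xs"
  unfolding good_def
proof (intro conjI ballI)
  have "enc (run xs None) = 1" using prodT_enc[OF assms(1), of None] assms(2) by simp
  moreover have "set_option (run xs None) \<subseteq> set xs" using run_set[of xs None] by simp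
  ultimately show "run xs None = None" using assms(1) by (cases "run xs None") auto
  fix w assume w: "w \<in> set xs"
  then have "w \<ge> 1" using assms(1) by auto
  then have "enc (run xs (Some w)) = w + 1" using prodT_enc[OF assms(1), of "Some w"] assms(2) by simp
  then show "run xs (Some w) = Some w" using \<open>w \<ge> 1\<close> by (cases "run xs (Some w)") auto
qed

lemma inv_gen:
  fixes m :: nat and a :: "nat \<Rightarrow> int"
  assumes "m > 0" "j \<in> {1..d}"
  shows "inv\<^bsub>sym_group (d + 1) \<times>\<times> integer_mod_group m\<^esub> (transpose 1 (j+1), a j mod int m)
     = (transpose 1 (j+1), (- (a j mod int m)) mod int m)"
proof -
  have c1: "transpose 1 (j+1) \<in> carrier (sym_group (d+1))"
    using assms(2) by (auto simp: sym_group_carrier intro!: permutes_swap_id)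
  have c2: "a j mod int m \<in> carrier (integer_mod_group m)"
    using assms(1) by (simp add: carrier_integer_mod_group)
  have i1: "inv\<^bsub>sym_group (d+1)\<^esub> (transpose 1 (j+1)) = transpose 1 (j+1)"
  proof -
    have "transpose 1 (j+1) \<otimes>\<^bsub>sym_group (d+1)\<^esub> transpose 1 (j+1) = \<one>\<^bsub>sym_group (d+1)\<^esub>"
      by (simp add: sym_group_mult sym_group_one)
    then show ?thesis by (rule group.inv_equality[OF sym_group_is_group _ c1 c1])
  qed
  show ?thesis
    using inv_DirProd[OF sym_group_is_group group_integer_mod_group c1 c2] i1 c2 by simp
qed

lemma modl: "((s mod m) + ((x mod m) + (-(y mod m)) mod m) mod m) mod m = (s + (x - y)) mod (m::int)"
  by (metis add_uminus_conv_diff mod_add_eq mod_diff_right_eq)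

lemma alt_word_eval:
  fixes m :: nat and a :: "nat \<Rightarrow> int" and i :: "nat \<Rightarrow> nat"
  assumes "m > 0" "\<forall>l<2*k. i l \<in> {1..d}"
  shows "alt_word (sym_group (d + 1) \<times>\<times> integer_mod_group m) (\<lambda>j. (transpose 1 (j + 1), a j mod int m)) i k
     = (prodT (map i [0..<2*k]), (\<Sum>l<k. a (i (2*l)) - a (i (2*l+1))) mod int m)"
  using assms(2)
proof (induction k)
  case 0 then show ?case by (simp add: prodT_def sym_group_one id_def)
next
  case (Suc k)
  have ih: "alt_word (sym_group (d + 1) \<times>\<times> integer_mod_group m) (\<lambda>j. (transpose 1 (j + 1), a j mod int m)) i k
     = (prodT (map i [0..<2*k]), (\<Sum>l<k. a (i (2*l)) - a (i (2*l+1))) mod int m)"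
    using Suc by simp
  have j2: "i (2*k+1) \<in> {1..d}" using Suc.prems by simp
  have up: "[0..<2*Suc k] = [0..<2*k] @ [2*k, 2*k+1]" by simp
  have pt: "prodT (map i [0..<2*Suc k]) = prodT (map i [0..<2*k]) \<circ> (transpose 1 (i (2*k)+1) \<circ> transpose 1 (i (2*k+1)+1))"
    unfolding up by (simp add: prodT_append) (simp add: prodT_def)
  have "alt_word (sym_group (d + 1) \<times>\<times> integer_mod_group m) (\<lambda>j. (transpose 1 (j + 1), a j mod int m)) i (Suc k)
    = (prodT (map i [0..<2*k]) \<circ> (transpose 1 (i (2*k)+1) \<circ> transpose 1 (i (2*k+1)+1)),
       ((\<Sum>l<k. a (i (2*l)) - a (i (2*l+1))) mod int m + ((a (i (2*k)) mod int m) + (-(a (i (2*k+1)) mod int m)) mod int m) mod int m) mod int m)"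
    by (simp only: alt_word.simps(2) ih inv_gen[OF assms(1) j2] mult_DirProd sym_group_mult mult_integer_mod_group)
  also have "\<dots> = (prodT (map i [0..<2*Suc k]), (\<Sum>l<Suc k. a (i (2*l)) - a (i (2*l+1))) mod int m)"
    unfolding pt sum.lessThan_Suc modl by (rule refl)
  finally show ?case .
qed

lemma pf_use:
  assumes "progression_free d a" "u \<in> {1..d}" "v \<in> {1..d}" "w \<in> {1..d}" "a u + a v = 2 * a w"
  shows "u = w"
  using assms unfolding progression_free_def by blast

lemma core:
  fixes a :: "nat \<Rightarrow> int" and i :: "nat \<Rightarrow> nat"
  assumes qr: "q \<in> {1..4::nat}" and lab0: "\<forall>l<2*q. i l \<in> {1..d}"
    and pid: "prodT (map i [0..<2*q]) = id"
    and S0: "(\<Sum>l<q. a (i (2*l)) - a (i (2*l+1))) = 0"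
    and nd: "\<forall>l<2*q. i l \<noteq> i (Suc l mod (2*q))"
    and pf: "progression_free d a"
  shows False
proof -
  define xs where "xs = map i [0..<2*q]"
  define c where "c = canon [] xs"
  have len: "length xs = 2*q" unfolding xs_def by simp
  have nth: "\<And>j. j < 2*q \<Longrightarrow> xs!j = i j" unfolding xs_def by simp
  have ne: "xs \<noteq> []" using qr len by auto
  have ge1: "\<forall>x\<in>set xs. x \<ge> 1" using lab0 unfolding xs_def by auto
  have gd: "good xs" using prodT_good[OF ge1] pid unfolding xs_def by simp
  have cy: "cycd xs" unfolding cycd_def len
  proof (intro allI impI)
    fix l assume l: "l < 2*q"
    have "Suc l mod (2*q) < 2*q" using l by simp
    then show "xs ! l \<noteq> xs ! (Suc l mod (2 * q))" using nth l nd by simp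
  qed
  have cset: "c \<in> set (filter (\<lambda>c. cycd c \<and> good c) (map (Cons 0) (gen2 1 0 (2*q - 1))))"
    using canon_props(1)[OF ne cy gd] len unfolding c_def by simp
  have E: "\<And>j l. j < 2*q \<Longrightarrow> l < 2*q \<Longrightarrow> (i j = i l) = (c!j = c!l)"
    using canon_props(2)[OF ne cy gd] len nth unfolding c_def by metis
  have "q = 1 \<or> q = 2 \<or> q = 3 \<or> q = 4" using qr by auto
  moreover have "q \<noteq> 1"
  proof
    assume "q = 1" then have h: "2*q - 1 = 1" by simp
    show False using cset[unfolded h comp2] by simp
  qed
  moreover have "q \<noteq> 2"
  proof
    assume "q = 2" then have h: "2*q - 1 = 3" by simp
    show False using cset[unfolded h comp4] by simp
  qed
  moreover have "q \<noteq> 3"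
  proof
    assume q3: "q = 3"
    then have h: "2*q - 1 = 5" by simp
    have cq: "c = [0,1,0,1,0,1]" using cset[unfolded h comp6] by simp
    have lab: "i 0 \<in> {1..d}" "i 1 \<in> {1..d}" using lab0 q3 by auto
    have e: "i 2 = i 0" "i 4 = i 0" "i 3 = i 1" "i 5 = i 1" using E cq q3 by simp_all
    have ne: "i 0 \<noteq> i 1" using E[of 0 1] cq q3 by simp
    have "(\<Sum>l<q. a (i (2*l)) - a (i (2*l+1))) = a (i 0) - a (i 1) + a (i 2) - a (i 3) + a (i 4) - a (i 5)"
      using q3 by (simp add: numeral_eq_Suc)
    then have "a (i 0) + a (i 0) = 2 * a (i 1)" using S0 e by simp
    then have "i 0 = i 1" using pf_use[OF pf, of "i 0" "i 0" "i 1"] lab by simp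
    then show False using ne by simp
  qed
  moreover have "q \<noteq> 4"
  proof
    assume q4: "q = 4"
    then have h: "2*q - 1 = 7" by simp
    have cs: "c = [0,1,0,2,0,1,0,2] \<or> c = [0,1,0,2,1,0,1,2] \<or> c = [0,1,2,0,1,0,2,1] \<or> c = [0,1,2,0,2,1,0,2] \<or> c = [0,1,2,1,0,1,2,1] \<or> c = [0,1,2,1,0,2,1,2]" using cset[unfolded h comp8] by simp
    have lab: "i 0 \<in> {1..d}" "i 1 \<in> {1..d}" "i 2 \<in> {1..d}" "i 3 \<in> {1..d}" using lab0 q4 by auto
    have E: "\<And>j l. j < 8 \<Longrightarrow> l < 8 \<Longrightarrow> (i j = i l) = (c!j = c!l)" using E q4 by simp
    have "(\<Sum>l<q. a (i (2*l)) - a (i (2*l+1))) = a (i 0) - a (i 1) + a (i 2) - a (i 3) + a (i 4) - a (i 5) + a (i 6) - a (i 7)"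
      using q4 by (simp add: numeral_eq_Suc)
    then have Sx: "a (i 0) - a (i 1) + a (i 2) - a (i 3) + a (i 4) - a (i 5) + a (i 6) - a (i 7) = 0" using S0 by simp
    from cs show False
    proof (elim disjE)
    assume cq: "c = [0,1,0,2,0,1,0,2]"
    have e0: "i 2 = i 0" using E[of 2 0] cq by simp
    have e1: "i 4 = i 0" using E[of 4 0] cq by simp
    have e2: "i 5 = i 1" using E[of 5 1] cq by simp
    have e3: "i 6 = i 0" using E[of 6 0] cq by simp
    have e4: "i 7 = i 3" using E[of 7 3] cq by simp
    have ne: "i 1 \<noteq> i 0" using E[of 1 0] cq by simp
    have "a (i 1) + a (i 3) = 2 * a (i 0)" using Sx[unfolded e0 e1 e2 e3 e4] by linarith
    then have "i 1 = i 0" using pf_use[OF pf, of "i 1" "i 3" "i 0"] lab by simp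
    then show False using ne by simp
  next
    assume cq: "c = [0,1,0,2,1,0,1,2]"
    have e0: "i 2 = i 0" using E[of 2 0] cq by simp
    have e1: "i 4 = i 1" using E[of 4 1] cq by simp
    have e2: "i 5 = i 0" using E[of 5 0] cq by simp
    have e3: "i 6 = i 1" using E[of 6 1] cq by simp
    have e4: "i 7 = i 3" using E[of 7 3] cq by simp
    have ne: "i 0 \<noteq> i 3" using E[of 0 3] cq by simp
    have "a (i 0) + a (i 1) = 2 * a (i 3)" using Sx[unfolded e0 e1 e2 e3 e4] by linarith
    then have "i 0 = i 3" using pf_use[OF pf, of "i 0" "i 1" "i 3"] lab by simp
    then show False using ne by simp
  next
    assume cq: "c = [0,1,2,0,1,0,2,1]"
    have e0: "i 3 = i 0" using E[of 3 0] cq by simp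
    have e1: "i 4 = i 1" using E[of 4 1] cq by simp
    have e2: "i 5 = i 0" using E[of 5 0] cq by simp
    have e3: "i 6 = i 2" using E[of 6 2] cq by simp
    have e4: "i 7 = i 1" using E[of 7 1] cq by simp
    have ne: "i 0 \<noteq> i 2" using E[of 0 2] cq by simp
    have "a (i 0) + a (i 1) = 2 * a (i 2)" using Sx[unfolded e0 e1 e2 e3 e4] by linarith
    then have "i 0 = i 2" using pf_use[OF pf, of "i 0" "i 1" "i 2"] lab by simp
    then show False using ne by simp
  next
    assume cq: "c = [0,1,2,0,2,1,0,2]"
    have e0: "i 3 = i 0" using E[of 3 0] cq by simp
    have e1: "i 4 = i 2" using E[of 4 2] cq by simp
    have e2: "i 5 = i 1" using E[of 5 1] cq by simp
    have e3: "i 6 = i 0" using E[of 6 0] cq by simp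
    have e4: "i 7 = i 2" using E[of 7 2] cq by simp
    have ne: "i 0 \<noteq> i 1" using E[of 0 1] cq by simp
    have "a (i 0) + a (i 2) = 2 * a (i 1)" using Sx[unfolded e0 e1 e2 e3 e4] by linarith
    then have "i 0 = i 1" using pf_use[OF pf, of "i 0" "i 2" "i 1"] lab by simp
    then show False using ne by simp
  next
    assume cq: "c = [0,1,2,1,0,1,2,1]"
    have e0: "i 3 = i 1" using E[of 3 1] cq by simp
    have e1: "i 4 = i 0" using E[of 4 0] cq by simp
    have e2: "i 5 = i 1" using E[of 5 1] cq by simp
    have e3: "i 6 = i 2" using E[of 6 2] cq by simp
    have e4: "i 7 = i 1" using E[of 7 1] cq by simp
    have ne: "i 0 \<noteq> i 1" using E[of 0 1] cq by simp
    have "a (i 0) + a (i 2) = 2 * a (i 1)" using Sx[unfolded e0 e1 e2 e3 e4] by linarith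
    then have "i 0 = i 1" using pf_use[OF pf, of "i 0" "i 2" "i 1"] lab by simp
    then show False using ne by simp
  next
    assume cq: "c = [0,1,2,1,0,2,1,2]"
    have e0: "i 3 = i 1" using E[of 3 1] cq by simp
    have e1: "i 4 = i 0" using E[of 4 0] cq by simp
    have e2: "i 5 = i 2" using E[of 5 2] cq by simp
    have e3: "i 6 = i 1" using E[of 6 1] cq by simp
    have e4: "i 7 = i 2" using E[of 7 2] cq by simp
    have ne: "i 1 \<noteq> i 0" using E[of 1 0] cq by simp
    have "a (i 1) + a (i 2) = 2 * a (i 0)" using Sx[unfolded e0 e1 e2 e3 e4] by linarith
    then have "i 1 = i 0" using pf_use[OF pf, of "i 1" "i 2" "i 0"] lab by simp
    then show False using ne by simp

    qed
  qed
  ultimately show False by blast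
qed

lemma bnd_aux:
  fixes X S A D M :: int
  assumes "X \<le> 4 * (D - A)" "S \<le> X" "- X \<le> S" "0 < A" "4 * D < M"
  shows "- M < S \<and> S < M"
proof
  show "- M < S" using assms by presburger
  show "S < M" using assms by presburger
qed

lemma mod_zero_small: "S mod m = 0 \<Longrightarrow> -m < S \<Longrightarrow> S < m \<Longrightarrow> S = (0::int)"
proof -
  assume h: "S mod m = 0" "-m < S" "S < m"
  show "S = 0"
  proof (cases "0 \<le> S")
    case True then show ?thesis using h mod_pos_pos_trivial by metis
  next
    case False
    have "(-S) mod m = 0" using h(1) by (simp add: mod_minus_eq[symmetric])
    moreover have "(-S) mod m = -S" using False h(2) by (intro mod_pos_pos_trivial) auto
    ultimately show ?thesis by simp
  qed
qed

theorem proposition5p6: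
  fixes d m :: nat and a :: "nat \<Rightarrow> int"
  assumes "d \<ge> 1"
    and "0 < a 1"
    and "\<forall>i\<in>{1..d}. \<forall>j\<in>{1..d}. i < j \<longrightarrow> a i < a j"
    and "progression_free d a"
    and "int m > 4 * a d"
  shows "cond_G (sym_group (d + 1) \<times>\<times> integer_mod_group m) d
           (\<lambda>i. (transpose 1 (i + 1), a i mod int m)) 4"
proof -
  have pos: "a 1 \<le> a j \<and> a j \<le> a d" if j: "j \<in> {1..d}" for j
  proof -
    have d1: "1 \<in> {1..d}" "d \<in> {1..d}" using assms(1) by auto
    have "a 1 \<le> a j"
    proof (cases "j = 1")
      case False
      then have "1 < j" using j by simp
      then show ?thesis using assms(3)[rule_format, OF d1(1) j] by simp
    qed simp
    moreover have "a j \<le> a d"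
    proof (cases "j = d")
      case False
      then have "j < d" using j by simp
      then show ?thesis using assms(3)[rule_format, OF j d1(2)] by simp
    qed simp
    ultimately show ?thesis by simp
  qed
  have ad: "a 1 \<le> a d" using pos[of d] assms(1) by simp
  have m0: "m > 0" using ad assms(2,5) by linarith
  show ?thesis unfolding cond_G_def
  proof
    fix q :: nat assume qr: "q \<in> {1..4}"
    show "cond_R (sym_group (d + 1) \<times>\<times> integer_mod_group m) d
           (\<lambda>i. (transpose 1 (i + 1), a i mod int m)) q" unfolding cond_R_def
    proof (intro allI impI)
      fix i :: "nat \<Rightarrow> nat"
      assume H: "(\<forall>l<2*q. i l \<in> {1..d}) \<and> alt_word (sym_group (d + 1) \<times>\<times> integer_mod_group m)
           (\<lambda>i. (transpose 1 (i + 1), a i mod int m)) i q = \<one>\<^bsub>sym_group (d + 1) \<times>\<times> integer_mod_group m\<^esub>"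
      then have lab: "\<forall>l<2*q. i l \<in> {1..d}" by simp
      show "\<exists>l<2*q. i l = i ((l + 1) mod (2*q))"
      proof (rule ccontr)
        assume nd0: "\<not> (\<exists>l<2*q. i l = i ((l + 1) mod (2*q)))"
        then have nd: "\<forall>l<2*q. i l \<noteq> i (Suc l mod (2*q))" by auto
        define S where "S = (\<Sum>l<q. a (i (2*l)) - a (i (2*l+1)))"
        have "(prodT (map i [0..<2*q]), S mod int m) = (id, 0)"
          using H alt_word_eval[OF m0 lab, of a] unfolding S_def by (simp add: sym_group_one)
        then have pid: "prodT (map i [0..<2*q]) = id" and Sm: "S mod int m = 0" by auto
        have up: "a (i (2*l)) - a (i (2*l+1)) \<le> a d - a 1" if "l \<in> {..<q}" for l
          using that pos[of "i (2*l)"] pos[of "i (2*l+1)"] lab by auto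
        have lo: "-(a d - a 1) \<le> a (i (2*l)) - a (i (2*l+1))" if "l \<in> {..<q}" for l
          using that pos[of "i (2*l)"] pos[of "i (2*l+1)"] lab by auto
        have "S \<le> (\<Sum>l<q. a d - a 1)" unfolding S_def by (rule sum_mono) (rule up)
        then have S1: "S \<le> int q * (a d - a 1)" by simp
        have "(\<Sum>l<q. -(a d - a 1)) \<le> S" unfolding S_def by (rule sum_mono) (rule lo)
        then have S2': "int q * (a 1 - a d) \<le> S" by simp
        have "int q * (a 1 - a d) = - (int q * (a d - a 1))" by (metis minus_diff_eq mult_minus_right)
        then have S2: "- (int q * (a d - a 1)) \<le> S" using S2' by simp
        have "int q * (a d - a 1) \<le> 4 * (a d - a 1)"
          using qr ad by (intro mult_right_mono) auto
        note T = this
        have b1: "- int m < S" and b2: "S < int m"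
          using bnd_aux[OF T S1 S2 assms(2) assms(5)] by auto
        have "S = 0" by (rule mod_zero_small[OF Sm b1 b2])
        then have "(\<Sum>l<q. a (i (2*l)) - a (i (2*l+1))) = 0" unfolding S_def .
        then show False by (rule core[OF qr lab pid _ nd assms(4)])
      qed
    qed
  qed
qed

end
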